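(* Let $0<\alpha\leq2$ and let $X=(X_t)_{t\geq0}$ be a scalar symmetric $\alpha$-stable Lévy process with $X_0=0$ and $\mathbb{E}[e^{iuX_t}]=e^{-|u|^{\alpha}t}$. Let $Z,\tilde Z$ be independent random variables with characteristic function $u\mapsto e^{-|u|^\alpha}$, and define \[ \phi(x,y)=\mathbb{P}\bigl(Z\geq0,\ \tilde Z\geq0,\ x^{1/\alpha}Z\leq y^{1/\alpha}\tilde Z\bigr),\qquad x,y\geq0. \] Then for $0<r<t$, $\mathbb{P}(X_r\geq0,X_t\geq0)=\frac14+\phi(t-r,r)$. *)

theory Defs
  imports "HOL-Probability.Probability"
begin

definition levy_process :: "'a measure \<Rightarrow> (real \<Rightarrow> 'a \<Rightarrow> real) \<Rightarrow> bool" where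
  "levy_process M X \<longleftrightarrow>
     prob_space M \<and>
     (\<forall>t\<ge>0. X t \<in> borel_measurable M) \<and>
     (AE \<omega> in M. X 0 \<omega> = 0) \<and>
     (\<forall>(n::nat) (ts::nat \<Rightarrow> real). 0 \<le> ts 0 \<and> (\<forall>i<n. ts i < ts (Suc i)) \<longrightarrow>
        prob_space.indep_vars M (\<lambda>_. borel) (\<lambda>i \<omega>. X (ts (Suc i)) \<omega> - X (ts i) \<omega>) {..<n}) \<and>
     (\<forall>s t. 0 \<le> s \<and> s \<le> t \<longrightarrow>
        distr M borel (\<lambda>\<omega>. X t \<omega> - X s \<omega>) = distr M borel (X (t - s))) \<and>
     (\<forall>t\<ge>0. \<forall>e>0.
        ((\<lambda>s. measure M {\<omega>\<in>space M. \<bar>X s \<omega> - X t \<omega>\<bar> > e}) \<longlongrightarrow> 0) (at t within {0..}))"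

end

theory Submission
  imports Defs
begin


lemma char_distr_eq:
  assumes "prob_space M" "f \<in> borel_measurable M"
  shows "char (distr M borel f) u = (CLINT x|M. iexp (u * f x))"
  using assms by (simp add: char_def integral_distr)

lemma stable_no_atom0:
  fixes \<rho> :: "real measure" and \<alpha> :: real
  assumes rd: "real_distribution \<rho>" and a: "0 < \<alpha>"
    and ch: "\<And>u. char \<rho> u = complex_of_real (exp (- (\<bar>u\<bar> powr \<alpha>)))"
  shows "measure \<rho> {0} = 0"
proof -
  interpret R: real_distribution \<rho> by (rule rd)
  let ?G = std_normal_distribution
  interpret G: real_distribution ?G by (rule real_dist_normal_dist)
  interpret P: pair_prob_space \<rho> ?G ..
  define h where "h n = (\<integral>x. exp (- ((real n * x)^2) / 2) \<partial>\<rho>)" for n :: nat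
  define g where "g n = (\<integral>u. exp (- (\<bar>real n * u\<bar> powr \<alpha>)) \<partial>?G)" for n :: nat
  have sR[simp]: "sets \<rho> = sets borel" by simp
  have sG[simp]: "sets ?G = sets borel" by simp
  have hg: "h n = g n" for n
  proof -
    have int: "integrable (\<rho> \<Otimes>\<^sub>M ?G) (\<lambda>(x, u). iexp (real n * x * u))"
      by (rule P.P.integrable_const_bound[where B=1]) (auto simp: norm_exp_i_times)
    have "complex_of_real (h n) = (CLINT x|\<rho>. char ?G (real n * x))"
      unfolding h_def char_std_normal_distribution by (simp add: integral_complex_of_real)
    also have "\<dots> = (CLINT x|\<rho>. CLINT u|?G. iexp (real n * x * u))"
      by (simp add: char_def)
    also have "\<dots> = (CLINT u|?G. CLINT x|\<rho>. iexp (real n * x * u))"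
      using P.Fubini_integral[OF int] by simp
    also have "\<dots> = (CLINT u|?G. char \<rho> (real n * u))"
      by (simp add: char_def mult_ac)
    also have "\<dots> = complex_of_real (g n)"
      unfolding g_def ch by (simp add: integral_complex_of_real)
    finally show ?thesis by simp
  qed
  have le: "measure \<rho> {0} \<le> h n" for n
  proof -
    have "measure \<rho> {0} = (\<integral>x. indicator {0} x \<partial>\<rho>)" by simp
    also have "\<dots> \<le> h n" unfolding h_def
      by (intro integral_mono R.integrable_const_bound[where B=1]) (auto split: split_indicator)
    finally show ?thesis .
  qed
  have "g \<longlonglongrightarrow> (\<integral>u. 0 \<partial>?G)"
    unfolding g_def
  proof (rule integral_dominated_convergence[where w="\<lambda>_. 1"])
    have "AE u in ?G. u \<noteq> 0"
      using AE_lborel_singleton[of "0::real"] by (subst AE_density) (auto elim: AE_mp)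
    then show "AE u in ?G. (\<lambda>n. exp (- (\<bar>real n * u\<bar> powr \<alpha>))) \<longlonglongrightarrow> 0"
    proof eventually_elim
      case (elim u)
      have 1: "filterlim (\<lambda>n. \<bar>u\<bar> * real n) at_top sequentially"
        using elim by (intro filterlim_tendsto_pos_mult_at_top[OF tendsto_const] filterlim_real_sequentially) auto
      have 2: "filterlim (\<lambda>n. exp (\<alpha> * ln (\<bar>u\<bar> * real n))) at_top sequentially"
        by (intro filterlim_compose[OF exp_at_top] filterlim_tendsto_pos_mult_at_top[OF tendsto_const a]
             filterlim_compose[OF ln_at_top 1])
      have 3: "eventually (\<lambda>n. exp (\<alpha> * ln (\<bar>u\<bar> * real n)) = \<bar>real n * u\<bar> powr \<alpha>) sequentially"
        using eventually_gt_at_top[of "0::nat"]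
        by eventually_elim (use elim in \<open>auto simp: powr_def abs_mult mult.commute\<close>)
      have "filterlim (\<lambda>n. \<bar>real n * u\<bar> powr \<alpha>) at_top sequentially"
        using filterlim_cong[OF refl refl 3] 2 by simp
      then have "filterlim (\<lambda>n. - (\<bar>real n * u\<bar> powr \<alpha>)) at_bot sequentially"
        by (simp add: filterlim_uminus_at_bot)
      then show ?case
        by (rule filterlim_compose[OF exp_at_bot])
    qed
  qed auto
  then have "g \<longlonglongrightarrow> 0" by simp
  have "h \<longlonglongrightarrow> 0" proof - have "h = g" using hg by (simp add: fun_eq_iff) then show ?thesis using \<open>g \<longlonglongrightarrow> 0\<close> by simp qed
  then have "measure \<rho> {0} \<le> 0" using le by (intro LIMSEQ_le_const) auto
  then show ?thesis using measure_nonneg[of \<rho> "{0}"] by linarith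
qed


lemma core:
  fixes \<rho> :: "real measure" and a b :: real
  assumes rd: "real_distribution \<rho>" and z: "measure \<rho> {0} = 0"
    and sym: "distr \<rho> borel uminus = \<rho>" and a: "0 < a" and b: "0 < b"
  shows "measure (\<rho> \<Otimes>\<^sub>M \<rho>) {p \<in> space (\<rho> \<Otimes>\<^sub>M \<rho>). 0 \<le> a * snd p \<and> 0 \<le> b * fst p + a * snd p}
    = 1/4 + measure (\<rho> \<Otimes>\<^sub>M \<rho>) {p \<in> space (\<rho> \<Otimes>\<^sub>M \<rho>). 0 \<le> fst p \<and> 0 \<le> snd p \<and> b * fst p \<le> a * snd p}"
proof -
  interpret R: real_distribution \<rho> by (rule rd)
  interpret P: pair_prob_space \<rho> \<rho> ..
  let ?Q = "\<rho> \<Otimes>\<^sub>M \<rho>"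
  have sR[simp, measurable_cong]: "sets \<rho> = sets borel" by simp
  have spR[simp]: "space \<rho> = UNIV" using sets_eq_imp_space_eq[OF sR] by simp
  have spQ[simp]: "space ?Q = UNIV" by (simp add: space_pair_measure)
  have sQ[measurable_cong]: "sets ?Q = sets (borel \<Otimes>\<^sub>M borel)"
    by (intro sets_pair_measure_cong) auto
  have mT: "measure ?Q (A \<times> B) = measure \<rho> A * measure \<rho> B" if "A \<in> sets borel" "B \<in> sets borel" for A B
    using that by (simp add: measure_def R.emeasure_pair_measure_Times enn2real_mult)
  have m1: "measure \<rho> {..<0} + measure \<rho> {0..} = 1"
  proof -
    have "{..<0::real} \<union> {0..} = UNIV" by auto
    moreover have "measure \<rho> ({..<0} \<union> {0..}) = measure \<rho> {..<0} + measure \<rho> {0..}"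
      by (rule R.finite_measure_Union) auto
    ultimately show ?thesis using R.prob_space by simp
  qed
  have m2: "measure \<rho> {..0} = measure \<rho> {..<0}"
  proof -
    have "{..<0::real} \<union> {0} = {..0}" by auto
    moreover have "measure \<rho> ({..<0} \<union> {0}) = measure \<rho> {..<0} + measure \<rho> {0}"
      by (rule R.finite_measure_Union) auto
    ultimately show ?thesis using z by simp
  qed
  have m3: "measure \<rho> {..0} = measure \<rho> {0..}"
  proof -
    have "measure \<rho> {..0} = measure (distr \<rho> borel uminus) {..0}" using sym by simp
    also have "\<dots> = measure \<rho> (uminus -` {..0} \<inter> space \<rho>)" by (subst measure_distr) auto
    also have "uminus -` {..0::real} \<inter> space \<rho> = {0..}" by auto
    finally show ?thesis .
  qed
  have half: "measure \<rho> {0..} = 1/2" using m1 m2 m3 by linarith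
  have half2: "measure \<rho> {0..} * measure \<rho> {0..} = 1/4" unfolding half by simp
  define A where "A = {p \<in> space ?Q. 0 \<le> fst p \<and> 0 \<le> snd p}"
  define C where "C = {p \<in> space ?Q. 0 \<le> snd p \<and> fst p < 0 \<and> 0 \<le> b * fst p + a * snd p}"
  define C' where "C' = {p \<in> space ?Q. 0 \<le> snd p \<and> 0 < fst p \<and> b * fst p \<le> a * snd p}"
  define D where "D = {p \<in> space ?Q. 0 = fst p \<and> 0 \<le> snd p}"
  have ms[measurable]: "A \<in> sets ?Q" "C \<in> sets ?Q" "C' \<in> sets ?Q" "D \<in> sets ?Q"
    unfolding A_def C_def C'_def D_def by measurable
  have "A = {0..} \<times> {0..}" unfolding A_def by auto
  then have mA: "measure ?Q A = 1/4" by (simp only: mT[of "{0..}" "{0..}"] half2 atLeast_borel)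
  have "D \<subseteq> {0} \<times> UNIV" unfolding D_def by auto
  then have "measure ?Q D \<le> measure ?Q ({0} \<times> UNIV)"
    by (intro P.finite_measure_mono) (auto simp: sQ)
  also have "\<dots> = 0" using z by (simp add: mT)
  finally have mD: "measure ?Q D = 0" using measure_nonneg[of ?Q D] by linarith
  have L: "{p \<in> space ?Q. 0 \<le> a * snd p \<and> 0 \<le> b * fst p + a * snd p} = A \<union> C"
    unfolding A_def C_def using a b
  proof (intro set_eqI iffI)
    fix p assume "p \<in> {p \<in> space ?Q. 0 \<le> a * snd p \<and> 0 \<le> b * fst p + a * snd p}"
    then have h: "0 \<le> a * snd p" "0 \<le> b * fst p + a * snd p" by auto
    then have "0 \<le> snd p" using a by (simp add: zero_le_mult_iff)
    then show "p \<in> {p \<in> space ?Q. 0 \<le> fst p \<and> 0 \<le> snd p} \<union> {p \<in> space ?Q. 0 \<le> snd p \<and> fst p < 0 \<and> 0 \<le> b * fst p + a * snd p}"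
      using h by auto
  next
    fix p assume "p \<in> {p \<in> space ?Q. 0 \<le> fst p \<and> 0 \<le> snd p} \<union> {p \<in> space ?Q. 0 \<le> snd p \<and> fst p < 0 \<and> 0 \<le> b * fst p + a * snd p}"
    then show "p \<in> {p \<in> space ?Q. 0 \<le> a * snd p \<and> 0 \<le> b * fst p + a * snd p}"
      using less_imp_le[OF a] less_imp_le[OF b] by (auto intro!: add_nonneg_nonneg mult_nonneg_nonneg)
  qed
  have R: "{p \<in> space ?Q. 0 \<le> fst p \<and> 0 \<le> snd p \<and> b * fst p \<le> a * snd p} = C' \<union> D"
    unfolding C'_def D_def using less_imp_le[OF a] by auto
  have refl: "distr ?Q (borel \<Otimes>\<^sub>M borel) (\<lambda>(y, x). (- y, x)) = ?Q"
  proof -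
    have "distr \<rho> borel uminus \<Otimes>\<^sub>M distr \<rho> borel (\<lambda>x. x) = distr ?Q (borel \<Otimes>\<^sub>M borel) (\<lambda>(y, x). (- y, x))"
      by (intro pair_measure_distr) (auto simp: distr_id2 intro: R.sigma_finite_measure)
    moreover have "distr \<rho> borel (\<lambda>x. x) = \<rho>" by (rule distr_id2) simp
    ultimately show ?thesis using sym by simp
  qed
  have mC: "measure ?Q C = measure ?Q C'"
  proof -
    have C'b: "C' \<in> sets (borel \<Otimes>\<^sub>M borel)" using \<open>C' \<in> sets ?Q\<close> sQ by simp
    have mf: "(\<lambda>(y, x). (- y, x)) \<in> measurable ?Q (borel \<Otimes>\<^sub>M borel)" by measurable
    have "measure ?Q C' = measure (distr ?Q (borel \<Otimes>\<^sub>M borel) (\<lambda>(y, x). (- y, x))) C'"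
      using refl by simp
    also have "\<dots> = measure ?Q ((\<lambda>(y, x). (- y, x)) -` C' \<inter> space ?Q)"
      by (rule measure_distr[OF mf C'b])
    also have "(\<lambda>(y, x). (- y, x)) -` C' \<inter> space ?Q = C"
      unfolding C_def C'_def by auto
    finally show ?thesis by simp
  qed
  have "measure ?Q (A \<union> C) = measure ?Q A + measure ?Q C"
    by (rule P.finite_measure_Union[OF ms(1) ms(2)]) (auto simp: A_def C_def)
  moreover have "measure ?Q (C' \<union> D) = measure ?Q C' + measure ?Q D"
    by (rule P.finite_measure_Union[OF ms(3) ms(4)]) (auto simp: C'_def D_def)
  ultimately show ?thesis using L R mA mC mD by simp
qed


lemma levy_indep2:
  assumes L: "levy_process M X" and r: "0 < r" and rt: "r < t"
  shows "prob_space.indep_var M borel (\<lambda>\<omega>. X t \<omega> - X r \<omega>) borel (\<lambda>\<omega>. X r \<omega> - X 0 \<omega>)"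
proof -
  interpret prob_space M using L unfolding levy_process_def by auto
  have meas: "X s \<in> borel_measurable M" if "0 \<le> s" for s using L that unfolding levy_process_def by auto
  have [measurable]: "X 0 \<in> borel_measurable M" "X r \<in> borel_measurable M" "X t \<in> borel_measurable M"
    using meas r rt by auto
  define ts where "ts = (\<lambda>i::nat. if i = 0 then 0 else if i = 1 then r else t)"
  have "0 \<le> ts 0 \<and> (\<forall>i<2. ts i < ts (Suc i))" using r rt by (auto simp: ts_def less_Suc_eq)
  then have iv: "indep_vars (\<lambda>_. borel) (\<lambda>i \<omega>. X (ts (Suc i)) \<omega> - X (ts i) \<omega>) {..<2}"
    using L unfolding levy_process_def by blast
  define F where "F i = sigma_sets (space M) {(\<lambda>\<omega>. X (ts (Suc i)) \<omega> - X (ts i) \<omega>) -` A \<inter> space M | A. A \<in> sets borel}" for i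
  have ind: "indep_sets F {..<2}" using iv unfolding indep_vars_def F_def by auto
  have F1: "F 1 = sigma_sets (space M) {(\<lambda>\<omega>. X t \<omega> - X r \<omega>) -` A \<inter> space M | A. A \<in> sets borel}"
    by (simp add: F_def ts_def)
  have F0: "F 0 = sigma_sets (space M) {(\<lambda>\<omega>. X r \<omega> - X 0 \<omega>) -` A \<inter> space M | A. A \<in> sets borel}"
    by (simp add: F_def ts_def)
  have ev: "F i \<subseteq> events" if "i < 2" for i using ind that unfolding indep_sets_def by auto
  have pr: "prob (x \<inter> y) = prob x * prob y" if "x \<in> F 1" "y \<in> F 0" for x y
  proof -
    have "prob (\<Inter>j\<in>{0,1::nat}. (\<lambda>j. if j = 0 then y else x) j) = (\<Prod>j\<in>{0,1::nat}. prob ((\<lambda>j. if j = 0 then y else x) j))"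
      by (rule indep_setsD[OF ind]) (use that in auto)
    then show ?thesis by (simp add: Int_commute)
  qed
  have rv1: "random_variable borel (\<lambda>\<omega>. X t \<omega> - X r \<omega>)" by measurable
  have rv2: "random_variable borel (\<lambda>\<omega>. X r \<omega> - X 0 \<omega>)" by measurable
  show ?thesis
    unfolding indep_var_eq indep_sets2_eq
    using ev[of 0] ev[of 1] pr rv1 rv2 by (auto simp: F0[symmetric] F1[symmetric])
qed


lemma char_scale:
  fixes \<rho> :: "real measure"
  assumes rd: "real_distribution \<rho>"
    and ch: "\<And>u. char \<rho> u = complex_of_real (exp (- (\<bar>u\<bar> powr \<alpha>)))" and c: "0 < c"
  shows "char (distr \<rho> borel (\<lambda>x. c * x)) u = complex_of_real (exp (- (\<bar>u\<bar> powr \<alpha>) * c powr \<alpha>))"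
proof -
  interpret R: real_distribution \<rho> by (rule rd)
  have "char (distr \<rho> borel (\<lambda>x. c * x)) u = (CLINT x|\<rho>. iexp (u * (c * x)))"
    by (rule char_distr_eq) (auto simp: R.prob_space_axioms)
  also have "\<dots> = char \<rho> (u * c)" by (simp add: char_def mult_ac)
  also have "\<dots> = complex_of_real (exp (- (\<bar>u\<bar> powr \<alpha>) * c powr \<alpha>))"
    using c by (simp add: ch abs_mult powr_mult)
  finally show ?thesis .
qed

lemma char_sym:
  fixes \<rho> :: "real measure"
  assumes rd: "real_distribution \<rho>"
    and ch: "\<And>u. char \<rho> u = complex_of_real (exp (- (\<bar>u\<bar> powr \<alpha>)))"
  shows "distr \<rho> borel uminus = \<rho>"
proof (rule Levy_uniqueness)
  interpret R: real_distribution \<rho> by (rule rd)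
  show "real_distribution (distr \<rho> borel uminus)" by (rule R.real_distribution_distr) auto
  show "real_distribution \<rho>" by (rule rd)
  show "char (distr \<rho> borel uminus) = char \<rho>"
  proof
    fix u
    have "char (distr \<rho> borel uminus) u = (CLINT x|\<rho>. iexp (u * (- x)))"
      by (rule char_distr_eq) (auto simp: R.prob_space_axioms)
    also have "\<dots> = char \<rho> (- u)" by (simp add: char_def)
    also have "\<dots> = char \<rho> u" by (simp add: ch)
    finally show "char (distr \<rho> borel uminus) u = char \<rho> u" .
  qed
qed


theorem lemma8:
  fixes M :: "'a measure" and X :: "real \<Rightarrow> 'a \<Rightarrow> real"
    and N :: "'b measure" and Z Z' :: "'b \<Rightarrow> real"
    and \<alpha> r t :: real
  assumes "0 < \<alpha>" and "\<alpha> \<le> 2"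
    and "levy_process M X"
    and "\<And>s u. 0 \<le> s \<Longrightarrow>
           char (distr M borel (X s)) u = complex_of_real (exp (- (\<bar>u\<bar> powr \<alpha>) * s))"
    and "prob_space N"
    and "Z \<in> borel_measurable N" and "Z' \<in> borel_measurable N"
    and "prob_space.indep_var N borel Z borel Z'"
    and "\<And>u. char (distr N borel Z) u = complex_of_real (exp (- (\<bar>u\<bar> powr \<alpha>)))"
    and "\<And>u. char (distr N borel Z') u = complex_of_real (exp (- (\<bar>u\<bar> powr \<alpha>)))"
    and "0 < r" and "r < t"
  shows "measure M {\<omega> \<in> space M. X r \<omega> \<ge> 0 \<and> X t \<omega> \<ge> 0}
         = 1/4 + measure N {\<omega> \<in> space N. Z \<omega> \<ge> 0 \<and> Z' \<omega> \<ge> 0 \<and>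
               (t - r) powr (1/\<alpha>) * Z \<omega> \<le> r powr (1/\<alpha>) * Z' \<omega>}"
proof -
  note al = assms(1) and L = assms(3) and chX = assms(4) and NP = assms(5)
    and ind = assms(8) and chZ = assms(9) and chZ' = assms(10) and r = assms(11) and rt = assms(12)
  interpret MP: prob_space M using L unfolding levy_process_def by auto
  interpret NP: prob_space N by (rule NP)
  have measX: "X s \<in> borel_measurable M" if "0 \<le> s" for s using L that unfolding levy_process_def by auto
  have [measurable]: "X 0 \<in> borel_measurable M" "X r \<in> borel_measurable M" "X t \<in> borel_measurable M"
    using measX r rt by auto
  have [measurable]: "Z \<in> borel_measurable N" "Z' \<in> borel_measurable N" using assms(6,7) .
  have stat: "distr M borel (\<lambda>\<omega>. X t' \<omega> - X s \<omega>) = distr M borel (X (t' - s))" if "0 \<le> s" "s \<le> t'" for s t'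
    using L that unfolding levy_process_def by auto
  have AE0: "AE \<omega> in M. X 0 \<omega> = 0" using L unfolding levy_process_def by auto
  define \<rho> where "\<rho> = distr N borel Z"
  have rd: "real_distribution \<rho>" unfolding \<rho>_def by (rule NP.real_distribution_distr) simp
  interpret R: real_distribution \<rho> by (rule rd)
  have ch: "char \<rho> u = complex_of_real (exp (- (\<bar>u\<bar> powr \<alpha>)))" for u unfolding \<rho>_def by (rule chZ)
  have \<rho>': "distr N borel Z' = \<rho>"
    by (rule Levy_uniqueness) (auto simp: rd \<rho>_def fun_eq_iff chZ chZ')
  have z: "measure \<rho> {0} = 0" by (rule stable_no_atom0[OF rd al ch])
  have sym: "distr \<rho> borel uminus = \<rho>" by (rule char_sym[OF rd ch])
  define a where "a = r powr (1/\<alpha>)"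
  define b where "b = (t - r) powr (1/\<alpha>)"
  have a0: "0 < a" "a powr \<alpha> = r" using r al by (auto simp: a_def powr_powr)
  have b0: "0 < b" "b powr \<alpha> = t - r" using rt al by (auto simp: b_def powr_powr)
  have rdX: "real_distribution (distr M borel (X s))" if "0 \<le> s" for s
    by (rule MP.real_distribution_distr) (use measX that in auto)
  have rdS: "real_distribution (distr \<rho> borel (\<lambda>x. c * x))" for c
    by (rule R.real_distribution_distr) auto
  have \<mu>: "distr M borel (\<lambda>\<omega>. X r \<omega> - X 0 \<omega>) = distr \<rho> borel (\<lambda>x. a * x)"
  proof -
    have "distr M borel (\<lambda>\<omega>. X r \<omega> - X 0 \<omega>) = distr M borel (X r)" using stat[of 0 r] r by simp
    also have "\<dots> = distr \<rho> borel (\<lambda>x. a * x)"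
      by (rule Levy_uniqueness) (use r rdX rdS in \<open>auto simp: fun_eq_iff chX char_scale[OF rd ch a0(1)] a0(2)\<close>)
    finally show ?thesis .
  qed
  have \<nu>: "distr M borel (\<lambda>\<omega>. X t \<omega> - X r \<omega>) = distr \<rho> borel (\<lambda>x. b * x)"
  proof -
    have "distr M borel (\<lambda>\<omega>. X t \<omega> - X r \<omega>) = distr M borel (X (t - r))" using stat[of r t] r rt by simp
    also have "\<dots> = distr \<rho> borel (\<lambda>x. b * x)"
      by (rule Levy_uniqueness) (use r rt rdX rdS in \<open>auto simp: fun_eq_iff chX char_scale[OF rd ch b0(1)] b0(2)\<close>)
    finally show ?thesis .
  qed
  let ?Q = "\<rho> \<Otimes>\<^sub>M \<rho>"
  have sR[simp, measurable_cong]: "sets \<rho> = sets borel" by (simp add: \<rho>_def)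
  have spR[simp]: "space \<rho> = UNIV" using sets_eq_imp_space_eq[OF sR] by simp
  have spQ[simp]: "space ?Q = UNIV" by (simp add: space_pair_measure)
  have sQ[measurable_cong]: "sets ?Q = sets (borel \<Otimes>\<^sub>M borel)"
    by (intro sets_pair_measure_cong) auto
  have sfS: "sigma_finite_measure (distr \<rho> borel (\<lambda>x. c * x))" for c
    using rdS[of c] by (simp add: real_distribution_def prob_space_imp_sigma_finite)
  have joint: "distr M (borel \<Otimes>\<^sub>M borel) (\<lambda>\<omega>. (X t \<omega> - X r \<omega>, X r \<omega> - X 0 \<omega>))
      = distr ?Q (borel \<Otimes>\<^sub>M borel) (\<lambda>(y, x). (b * y, a * x))"
  proof -
    have "distr M (borel \<Otimes>\<^sub>M borel) (\<lambda>\<omega>. (X t \<omega> - X r \<omega>, X r \<omega> - X 0 \<omega>))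
        = distr M borel (\<lambda>\<omega>. X t \<omega> - X r \<omega>) \<Otimes>\<^sub>M distr M borel (\<lambda>\<omega>. X r \<omega> - X 0 \<omega>)"
      using levy_indep2[OF L r rt] unfolding MP.indep_var_distribution_eq by simp
    also have "\<dots> = distr \<rho> borel (\<lambda>x. b * x) \<Otimes>\<^sub>M distr \<rho> borel (\<lambda>x. a * x)" by (simp add: \<mu> \<nu>)
    also have "\<dots> = distr ?Q (borel \<Otimes>\<^sub>M borel) (\<lambda>(y, x). (b * y, a * x))"
      by (rule pair_measure_distr) (auto simp: sfS)
    finally show ?thesis .
  qed
  have jointN: "distr N (borel \<Otimes>\<^sub>M borel) (\<lambda>\<omega>. (Z \<omega>, Z' \<omega>)) = ?Q"
    using ind unfolding NP.indep_var_distribution_eq by (simp add: \<rho>' \<rho>_def)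
  define S where "S = {p \<in> space ?Q. 0 \<le> snd p \<and> 0 \<le> fst p + snd p}"
  define T where "T = {p \<in> space ?Q. 0 \<le> fst p \<and> 0 \<le> snd p \<and> b * fst p \<le> a * snd p}"
  have "S \<in> sets ?Q" "T \<in> sets ?Q"
    unfolding S_def T_def by measurable
  then have [measurable]: "S \<in> sets (borel \<Otimes>\<^sub>M borel)" "T \<in> sets (borel \<Otimes>\<^sub>M borel)"
    using sQ by auto
  have "measure M {\<omega> \<in> space M. X r \<omega> \<ge> 0 \<and> X t \<omega> \<ge> 0}
      = measure M {\<omega> \<in> space M. 0 \<le> X r \<omega> - X 0 \<omega> \<and> 0 \<le> X t \<omega> - X r \<omega> + (X r \<omega> - X 0 \<omega>)}"
    by (rule measure_eq_AE) (use AE0 in \<open>auto elim!: AE_mp\<close>)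
  also have "\<dots> = measure M ((\<lambda>\<omega>. (X t \<omega> - X r \<omega>, X r \<omega> - X 0 \<omega>)) -` S \<inter> space M)"
    by (rule arg_cong[where f="measure M"]) (auto simp: S_def space_pair_measure)
  also have "\<dots> = measure (distr M (borel \<Otimes>\<^sub>M borel) (\<lambda>\<omega>. (X t \<omega> - X r \<omega>, X r \<omega> - X 0 \<omega>))) S"
    by (rule measure_distr[symmetric]) auto
  also have "\<dots> = measure ?Q ((\<lambda>(y, x). (b * y, a * x)) -` S \<inter> space ?Q)"
    unfolding joint by (rule measure_distr) auto
  also have "\<dots> = measure ?Q {p \<in> space ?Q. 0 \<le> a * snd p \<and> 0 \<le> b * fst p + a * snd p}"
    by (rule arg_cong[where f="measure ?Q"]) (auto simp: S_def space_pair_measure)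
  also have "\<dots> = 1/4 + measure ?Q {p \<in> space ?Q. 0 \<le> fst p \<and> 0 \<le> snd p \<and> b * fst p \<le> a * snd p}"
    by (rule core[OF rd z sym a0(1) b0(1)])
  also have "measure ?Q {p \<in> space ?Q. 0 \<le> fst p \<and> 0 \<le> snd p \<and> b * fst p \<le> a * snd p} = measure ?Q T"
    by (simp add: T_def space_pair_measure)
  also have "\<dots> = measure N ((\<lambda>\<omega>. (Z \<omega>, Z' \<omega>)) -` T \<inter> space N)"
    unfolding jointN[symmetric] by (rule measure_distr) auto
  also have "(\<lambda>\<omega>. (Z \<omega>, Z' \<omega>)) -` T \<inter> space N = {\<omega> \<in> space N. Z \<omega> \<ge> 0 \<and> Z' \<omega> \<ge> 0 \<and>
               (t - r) powr (1/\<alpha>) * Z \<omega> \<le> r powr (1/\<alpha>) * Z' \<omega>}"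
    by (auto simp: T_def a_def b_def space_pair_measure)
  finally show ?thesis .
qed
end
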